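(* Let $S=(Z_1,\dots,Z_n)$ with $Z_i$ i.i.d. $\sim P_Z$ on $\mathcal Z$, let $P_{W|S}$ be a learning algorithm, and let $\ell:\mathcal W\times\mathcal Z\to\mathbb R$ be a loss such that for every $w\in\mathcal W$ and every $\lambda\in\mathbb R$, $\mathbf E_{P_Z}\big[e^{\lambda(\ell(w,Z)-\mathbf E\ell(w,Z))}\big]\le e^{\lambda^2\sigma^2/2}$. Let $\beta>1$, assume $P_{SW}\ll P_SP_W$ and $\mathcal H_\beta(S,W)<\infty$, and let $\delta\in(0,1)$. Then with probability at least $1-\delta$ over $S\sim P_S$, $$\mathbf E_{P_{W|S}}[\mathrm{gen}(S,W)]\le\sqrt{\frac{2\sigma^2}{n}}\left(\log\sqrt{\frac{\pi\beta}{\beta-1}}+\frac{\beta}{4(\beta-1)}+\log\frac{\big((\beta-1)\mathcal H_\beta(S,W)+1\big)^{1/\beta}}{\delta}\right).$$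
   Context: $\mathrm{gen}(S,W):=\mathbf E_{Z\sim P_Z}[\ell(W,Z)]-\frac1n\sum_{i=1}^n\ell(W,Z_i)$. $P_{SW}$ is the joint law of $(S,W)$ and $P_S,P_W$ its marginals. $\mathcal H_\beta(S,W):=\mathcal H_\beta(P_{SW}\Vert P_SP_W)$ where $\mathcal H_\beta(P\Vert Q):=\int\frac{(\mathrm dP/\mathrm dQ)^\beta-1}{\beta-1}\,\mathrm dQ$. Logarithms are natural. *)

theory Defs
  imports "HOL-Probability.Probability"
begin

text \<open>Tsallis-type divergence H_beta(P || Q) = integral over Q of ((dP/dQ)^beta - 1)/(beta - 1).
  The density dP/dQ is RN_deriv Q P (so that density Q (RN_deriv Q P) = P when P << Q).\<close>
definition H_div :: "real \<Rightarrow> 'a measure \<Rightarrow> 'a measure \<Rightarrow> real" where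
  "H_div \<beta> P Q = (\<integral>x. ((enn2real (RN_deriv Q P x)) powr \<beta> - 1) / (\<beta> - 1) \<partial>Q)"

definition H_div_finite :: "real \<Rightarrow> 'a measure \<Rightarrow> 'a measure \<Rightarrow> bool" where
  "H_div_finite \<beta> P Q \<longleftrightarrow> integrable Q (\<lambda>x. ((enn2real (RN_deriv Q P x)) powr \<beta> - 1) / (\<beta> - 1))"

definition sample_law :: "nat \<Rightarrow> 'z measure \<Rightarrow> (nat \<Rightarrow> 'z) measure" where
  "sample_law n PZ = PiM {..<n} (\<lambda>_. PZ)"

text \<open>Joint law P_SW of (S,W) where S ~ PS and W | S=s ~ K s.\<close>
definition joint_law :: "'s measure \<Rightarrow> 'w measure \<Rightarrow> ('s \<Rightarrow> 'w measure) \<Rightarrow> ('s \<times> 'w) measure" where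
  "joint_law PS MW K = PS \<bind> (\<lambda>s. K s \<bind> (\<lambda>w. return (PS \<Otimes>\<^sub>M MW) (s, w)))"

definition marginal_W :: "'s measure \<Rightarrow> ('s \<Rightarrow> 'w measure) \<Rightarrow> 'w measure" where
  "marginal_W PS K = PS \<bind> K"

definition gen :: "nat \<Rightarrow> 'z measure \<Rightarrow> ('w \<Rightarrow> 'z \<Rightarrow> real) \<Rightarrow> (nat \<Rightarrow> 'z) \<Rightarrow> 'w \<Rightarrow> real" where
  "gen n PZ loss s w = (\<integral>z. loss w z \<partial>PZ) - (1 / real n) * (\<Sum>i<n. loss w (s i))"

end

theory Submission
  imports Defs
begin

lemma young_norm:
  fixes \<beta> q \<rho> e A B :: real
  assumes b: "\<beta> > 1" and q: "q = \<beta> / (\<beta> - 1)" and r: "\<rho> \<ge> 0" and e: "e \<ge> 0" and A: "A > 0" and B: "B > 0"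
  shows "\<rho> * e \<le> A powr (1/\<beta>) * B powr (1/q) * (\<rho> powr \<beta> / (A * \<beta>) + e powr q / (B * q))"
proof -
  have q1: "q > 1" using b unfolding q by (simp add: less_divide_eq)
  have pq: "1/\<beta> + 1/q = 1" using b unfolding q by (simp add: field_simps)
  define a0 where "a0 = A powr (1/\<beta>)"
  define b0 where "b0 = B powr (1/q)"
  have a0: "a0 > 0" "a0 powr \<beta> = A" using A b by (auto simp: a0_def powr_powr)
  have b0: "b0 > 0" "b0 powr q = B" using B q1 by (auto simp: b0_def powr_powr)
  have "(\<rho> / a0) * (e / b0) \<le> (\<rho> / a0) powr \<beta> / \<beta> + (e / b0) powr q / q"
    by (rule Youngs_inequality[OF b q1 pq]) (use r e a0 b0 in auto)
  also have "\<dots> = \<rho> powr \<beta> / (A * \<beta>) + e powr q / (B * q)"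
    using r e a0 b0 by (simp add: powr_divide)
  finally have "(\<rho> * e) / (a0 * b0) \<le> \<rho> powr \<beta> / (A * \<beta>) + e powr q / (B * q)" by simp
  then show ?thesis using a0 b0 unfolding a0_def[symmetric] b0_def[symmetric]
    by (simp add: divide_le_eq mult.commute)
qed

locale gsl =
  fixes PZ :: "'z measure" and MW :: "'w measure"
    and K :: "(nat \<Rightarrow> 'z) \<Rightarrow> 'w measure"
    and loss :: "'w \<Rightarrow> 'z \<Rightarrow> real"
    and n :: nat and \<sigma> :: real
  assumes PZ: "prob_space PZ"
    and n: "n \<ge> 1"
    and K: "K \<in> sample_law n PZ \<rightarrow>\<^sub>M prob_algebra MW"
    and loss_meas: "(\<lambda>(w, z). loss w z) \<in> borel_measurable (MW \<Otimes>\<^sub>M PZ)"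
    and subgauss: "\<And>w t. w \<in> space MW \<Longrightarrow>
        (\<integral>\<^sup>+ z. ennreal (exp (t * (loss w z - (\<integral>z'. loss w z' \<partial>PZ)))) \<partial>PZ)
          \<le> ennreal (exp (t\<^sup>2 * \<sigma>\<^sup>2 / 2))"
begin

abbreviation "PS \<equiv> sample_law n PZ"
abbreviation "PW \<equiv> marginal_W PS K"
abbreviation "Q \<equiv> PS \<Otimes>\<^sub>M PW"
abbreviation "P \<equiv> joint_law PS MW K"
abbreviation "g \<equiv> gen n PZ loss"

lemma PS_prob: "prob_space PS"
  unfolding sample_law_def by (intro prob_space_PiM PZ)

lemma PS_alg: "PS \<in> space (prob_algebra PS)"
  using PS_prob by (simp add: space_prob_algebra)

lemma PW_prob: "prob_space PW"
  unfolding marginal_W_def by (rule prob_space_bind'[OF PS_alg K])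

lemma sets_PW: "sets PW = sets MW"
  unfolding marginal_W_def by (rule sets_bind'[OF PS_alg K])

lemma Ks: "s \<in> space PS \<Longrightarrow> prob_space (K s) \<and> sets (K s) = sets MW"
  using measurable_space[OF K] by (auto simp: space_prob_algebra)

lemma ker2: "(\<lambda>s. K s \<bind> (\<lambda>w. return (PS \<Otimes>\<^sub>M MW) (s, w))) \<in> PS \<rightarrow>\<^sub>M prob_algebra (PS \<Otimes>\<^sub>M MW)"
  by (intro measurable_bind_prob_space2[OF K]) measurable

lemma P_prob: "prob_space P"
  unfolding joint_law_def by (rule prob_space_bind'[OF PS_alg ker2])

lemma sets_P: "sets P = sets (PS \<Otimes>\<^sub>M MW)"
  unfolding joint_law_def by (rule sets_bind'[OF PS_alg ker2])

lemma sets_Q: "sets Q = sets (PS \<Otimes>\<^sub>M MW)"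
  by (intro sets_pair_measure_cong sets_PW refl)

lemma Q_prob: "prob_space Q"
  by (intro prob_space_pair PS_prob PW_prob)

lemma loss_meas'[measurable]: "(\<lambda>x. loss (fst x) (snd x)) \<in> borel_measurable (MW \<Otimes>\<^sub>M PZ)"
  using loss_meas by (simp add: case_prod_beta')

lemma mean_meas[measurable]: "(\<lambda>w. \<integral>z. loss w z \<partial>PZ) \<in> borel_measurable MW"
proof -
  interpret prob_space PZ by (rule PZ)
  show ?thesis by (rule borel_measurable_lebesgue_integral) (use loss_meas in simp)
qed

lemma g_meas[measurable]: "(\<lambda>x. g (fst x) (snd x)) \<in> borel_measurable (PS \<Otimes>\<^sub>M MW)"
  unfolding gen_def sample_law_def
proof (intro borel_measurable_diff borel_measurable_times borel_measurable_sum measurable_const)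
  show "(\<lambda>x. \<integral>z. loss (snd x) z \<partial>PZ) \<in> borel_measurable (Pi\<^sub>M {..<n} (\<lambda>_. PZ) \<Otimes>\<^sub>M MW)"
    by measurable
  fix i assume "i \<in> {..<n}"
  have "(\<lambda>x. (snd x, fst x i)) \<in> Pi\<^sub>M {..<n} (\<lambda>_. PZ) \<Otimes>\<^sub>M MW \<rightarrow>\<^sub>M MW \<Otimes>\<^sub>M PZ"
    using \<open>i \<in> {..<n}\<close> by (intro measurable_Pair measurable_snd measurable_compose[OF measurable_fst] measurable_component_singleton)
  from measurable_compose[OF this loss_meas'] show "(\<lambda>x. loss (snd x) (fst x i)) \<in> borel_measurable (Pi\<^sub>M {..<n} (\<lambda>_. PZ) \<Otimes>\<^sub>M MW)" by simp
qed simp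


lemma nnP:
  assumes h[measurable]: "h \<in> borel_measurable (PS \<Otimes>\<^sub>M MW)"
  shows "(\<integral>\<^sup>+ x. h x \<partial>P) = (\<integral>\<^sup>+ s. \<integral>\<^sup>+ w. h (s, w) \<partial>K s \<partial>PS)"
proof -
  have "(\<integral>\<^sup>+ x. h x \<partial>P) = (\<integral>\<^sup>+ s. \<integral>\<^sup>+ x. h x \<partial>(K s \<bind> (\<lambda>w. return (PS \<Otimes>\<^sub>M MW) (s, w))) \<partial>PS)"
    unfolding joint_law_def
    by (rule nn_integral_bind[OF h measurable_prob_algebraD[OF ker2]])
  also have "\<dots> = (\<integral>\<^sup>+ s. \<integral>\<^sup>+ w. h (s, w) \<partial>K s \<partial>PS)"
  proof (rule nn_integral_cong)
    fix s assume s: "s \<in> space PS"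
    have r: "(\<lambda>w. return (PS \<Otimes>\<^sub>M MW) (s, w)) \<in> K s \<rightarrow>\<^sub>M subprob_algebra (PS \<Otimes>\<^sub>M MW)"
      using s Ks[OF s] by (simp cong: measurable_cong_sets)
    have "(\<integral>\<^sup>+ x. h x \<partial>(K s \<bind> (\<lambda>w. return (PS \<Otimes>\<^sub>M MW) (s, w))))
        = (\<integral>\<^sup>+ w. \<integral>\<^sup>+ x. h x \<partial>return (PS \<Otimes>\<^sub>M MW) (s, w) \<partial>K s)"
      by (rule nn_integral_bind[OF h r])
    also have "\<dots> = (\<integral>\<^sup>+ w. h (s, w) \<partial>K s)"
      using s Ks[OF s] by (intro nn_integral_cong nn_integral_return) (auto simp: space_pair_measure dest: sets_eq_imp_space_eq)
    finally show "(\<integral>\<^sup>+ x. h x \<partial>(K s \<bind> (\<lambda>w. return (PS \<Otimes>\<^sub>M MW) (s, w)))) = (\<integral>\<^sup>+ w. h (s, w) \<partial>K s)" .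
  qed
  finally show ?thesis .
qed

definition "RN = RN_deriv Q P"

lemma Q_sf: "sigma_finite_measure Q"
  using Q_prob prob_space_imp_sigma_finite by blast

lemma dens:
  assumes ac: "absolutely_continuous Q P"
  shows "density Q RN = P"
  unfolding RN_def
  by (rule sigma_finite_measure.density_RN_deriv[OF Q_sf ac]) (simp add: sets_P sets_Q)

lemma nnPQ:
  assumes ac: "absolutely_continuous Q P"
    and h[measurable]: "h \<in> borel_measurable (PS \<Otimes>\<^sub>M MW)"
  shows "(\<integral>\<^sup>+ x. h x \<partial>P) = (\<integral>\<^sup>+ x. RN x * h x \<partial>Q)"
proof -
  have "(\<integral>\<^sup>+ x. h x \<partial>P) = (\<integral>\<^sup>+ x. h x \<partial>density Q RN)" by (simp add: dens[OF ac])
  also have "\<dots> = (\<integral>\<^sup>+ x. RN x * h x \<partial>Q)"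
  proof (rule nn_integral_density)
    show "RN \<in> borel_measurable Q" unfolding RN_def by (rule borel_measurable_RN_deriv)
    show "h \<in> borel_measurable Q" using h by (simp add: measurable_cong_sets[OF sets_Q refl])
  qed
  finally show ?thesis .
qed

lemma RN_fin:
  assumes ac: "absolutely_continuous Q P"
  shows "AE x in Q. RN x \<noteq> \<infinity>"
  unfolding RN_def
  by (rule sigma_finite_measure.RN_deriv_finite[OF Q_sf])
     (use P_prob prob_space_imp_sigma_finite ac in \<open>auto simp: sets_P sets_Q\<close>)


lemma sub_S:
  assumes w: "w \<in> space MW"
  shows "(\<integral>\<^sup>+ s. ennreal (exp (t * g s w)) \<partial>PS) \<le> ennreal (exp (t\<^sup>2 * \<sigma>\<^sup>2 / (2 * n)))"
proof -
  interpret PZ: prob_space PZ by (rule PZ)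
  interpret prd: product_sigma_finite "\<lambda>_. PZ"
    by unfold_locales
  define m where "m = (\<integral>z. loss w z \<partial>PZ)"
  define f where "f = (\<lambda>(i::nat) z. ennreal (exp ((- t / n) * (loss w z - m))))"
  have nn: "n > 0" using n by simp
  have eq: "exp (t * g s w) = (\<Prod>i<n. exp ((- t / n) * (loss w (s i) - m)))" for s
  proof -
    have "t * g s w = (\<Sum>i<n. (- t / n) * (loss w (s i) - m))"
    proof -
      have "(\<Sum>i<n. (- t / n) * (loss w (s i) - m)) = (- t / n) * ((\<Sum>i<n. loss w (s i)) - n * m)"
        by (simp only: sum_distrib_left[symmetric] sum_subtractf) simp
      also have "\<dots> = t * g s w" using nn by (simp add: gen_def m_def field_simps)
      finally show ?thesis by simp
    qed
    then show ?thesis by (simp add: exp_sum)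
  qed
  have fm: "f i \<in> borel_measurable PZ" for i
  proof -
    have "(\<lambda>z. loss w z) \<in> borel_measurable PZ"
      using measurable_Pair2[OF loss_meas w] by simp
    then show ?thesis unfolding f_def by measurable
  qed
  have "(\<integral>\<^sup>+ s. ennreal (exp (t * g s w)) \<partial>PS) = (\<integral>\<^sup>+ s. (\<Prod>i\<in>{..<n}. f i (s i)) \<partial>PS)"
    unfolding eq f_def by (simp add: prod_ennreal)
  also have "\<dots> = (\<Prod>i\<in>{..<n}. integral\<^sup>N PZ (f i))"
    unfolding sample_law_def by (rule prd.product_nn_integral_prod) (auto intro: fm)
  also have "\<dots> \<le> (\<Prod>i\<in>{..<n}. ennreal (exp ((- t / n)\<^sup>2 * \<sigma>\<^sup>2 / 2)))"
    using subgauss[OF w, of "- t / n"] unfolding f_def m_def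
    by (simp add: power_mono)
  also have "\<dots> = ennreal (exp (t\<^sup>2 * \<sigma>\<^sup>2 / (2 * n)))"
  proof -
    have "(\<Prod>i\<in>{..<n}. ennreal (exp ((- t / n)\<^sup>2 * \<sigma>\<^sup>2 / 2))) = ennreal (exp ((- t / n)\<^sup>2 * \<sigma>\<^sup>2 / 2) ^ n)"
      by (simp add: ennreal_power)
    also have "exp ((- t / n)\<^sup>2 * \<sigma>\<^sup>2 / 2) ^ n = exp (n * ((- t / n)\<^sup>2 * \<sigma>\<^sup>2 / 2))"
      by (simp only: exp_of_nat_mult[symmetric])
    also have "n * ((- t / n)\<^sup>2 * \<sigma>\<^sup>2 / 2) = t\<^sup>2 * \<sigma>\<^sup>2 / (2 * n)"
      using nn by (simp add: power2_eq_square field_simps)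
    finally show ?thesis .
  qed
  finally show ?thesis .
qed

lemma sub_Q:
  "(\<integral>\<^sup>+ x. ennreal (exp (t * g (fst x) (snd x))) \<partial>Q) \<le> ennreal (exp (t\<^sup>2 * \<sigma>\<^sup>2 / (2 * n)))"
proof -
  interpret S: prob_space PS by (rule PS_prob)
  interpret W: prob_space PW by (rule PW_prob)
  interpret pair_prob_space PS PW by unfold_locales
  have fm: "(\<lambda>x. ennreal (exp (t * g (fst x) (snd x)))) \<in> borel_measurable Q"
    by (simp add: measurable_cong_sets[OF sets_Q refl])
  have "(\<integral>\<^sup>+ x. ennreal (exp (t * g (fst x) (snd x))) \<partial>Q) = (\<integral>\<^sup>+ w. \<integral>\<^sup>+ s. ennreal (exp (t * g s w)) \<partial>PS \<partial>PW)"
    using nn_integral_snd[OF fm] by simp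
  also have "\<dots> \<le> (\<integral>\<^sup>+ w. ennreal (exp (t\<^sup>2 * \<sigma>\<^sup>2 / (2 * n))) \<partial>PW)"
    by (intro nn_integral_mono sub_S) (simp add: sets_eq_imp_space_eq[OF sets_PW])
  also have "\<dots> = ennreal (exp (t\<^sup>2 * \<sigma>\<^sup>2 / (2 * n)))"
    by (simp add: W.emeasure_space_1)
  finally show ?thesis .
qed



definition "rho x = enn2real (RN x)"

lemma rho_meas[measurable]: "rho \<in> borel_measurable Q"
  unfolding rho_def RN_def by measurable

lemma g_measQ[measurable]: "(\<lambda>x. g (fst x) (snd x)) \<in> borel_measurable Q"
  by (simp add: measurable_cong_sets[OF sets_Q refl])

lemma holder:
  assumes ac: "absolutely_continuous Q P" and b: "\<beta> > 1"
    and int: "integrable Q (\<lambda>x. rho x powr \<beta>)" and Mpos: "(\<integral>x. rho x powr \<beta> \<partial>Q) > 0"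
  shows "(\<integral>\<^sup>+ x. RN x * ennreal (exp (lam * g (fst x) (snd x))) \<partial>Q)
     \<le> ennreal ((\<integral>x. rho x powr \<beta> \<partial>Q) powr (1/\<beta>) * exp (\<beta> / (\<beta> - 1) * lam\<^sup>2 * \<sigma>\<^sup>2 / (2 * n)))"
proof -
  define q where "q = \<beta> / (\<beta> - 1)"
  define M where "M = (\<integral>x. rho x powr \<beta> \<partial>Q)"
  define E where "E = exp ((q * lam)\<^sup>2 * \<sigma>\<^sup>2 / (2 * n))"
  define K0 where "K0 = M powr (1/\<beta>) * E powr (1/q)"
  define C1 where "C1 = K0 / (M * \<beta>)"
  define C2 where "C2 = K0 / (E * q)"
  have q1: "q > 1" using b unfolding q_def by (simp add: less_divide_eq)
  have pq: "1/\<beta> + 1/q = 1" using b unfolding q_def by (simp add: field_simps)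
  have M0: "M > 0" using Mpos by (simp add: M_def)
  have E0: "E > 0" by (simp add: E_def)
  have K0pos: "K0 \<ge> 0" by (simp add: K0_def)
  have C1: "C1 \<ge> 0" using K0pos M0 b by (simp add: C1_def)
  have C2: "C2 \<ge> 0" using K0pos E0 q1 by (simp add: C2_def)
  have ex: "exp y powr q = exp (q * y)" for y by (simp add: powr_def)
  have "(\<integral>\<^sup>+ x. RN x * ennreal (exp (lam * g (fst x) (snd x))) \<partial>Q)
      \<le> (\<integral>\<^sup>+ x. ennreal C1 * ennreal (rho x powr \<beta>) + ennreal C2 * ennreal (exp (q * lam * g (fst x) (snd x))) \<partial>Q)"
  proof (rule nn_integral_mono_AE)
    show "AE x in Q. RN x * ennreal (exp (lam * g (fst x) (snd x)))
      \<le> ennreal C1 * ennreal (rho x powr \<beta>) + ennreal C2 * ennreal (exp (q * lam * g (fst x) (snd x)))"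
      using RN_fin[OF ac]
    proof eventually_elim
      case (elim x)
      have rx: "RN x = ennreal (rho x)" using elim by (simp add: rho_def ennreal_enn2real_if)
      have "rho x * exp (lam * g (fst x) (snd x))
          \<le> M powr (1/\<beta>) * E powr (1/q) * (rho x powr \<beta> / (M * \<beta>) + exp (lam * g (fst x) (snd x)) powr q / (E * q))"
        by (rule young_norm[OF b q_def _ _ M0 E0]) (auto simp: rho_def)
      also have "\<dots> = C1 * rho x powr \<beta> + C2 * exp (q * lam * g (fst x) (snd x))"
        using ex[of "lam * g (fst x) (snd x)"] by (simp add: C1_def C2_def K0_def ring_distribs mult.assoc)
      finally have "ennreal (rho x * exp (lam * g (fst x) (snd x))) \<le> ennreal (C1 * rho x powr \<beta> + C2 * exp (q * lam * g (fst x) (snd x)))"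
        by (rule ennreal_leI)
      then show ?case using C1 C2
        proof -
        have r0: "rho x \<ge> 0" by (simp add: rho_def)
        have "ennreal (rho x * exp (lam * g (fst x) (snd x))) = RN x * ennreal (exp (lam * g (fst x) (snd x)))"
          using r0 by (simp add: rx ennreal_mult)
        moreover have "ennreal (C1 * rho x powr \<beta> + C2 * exp (q * lam * g (fst x) (snd x)))
            = ennreal C1 * ennreal (rho x powr \<beta>) + ennreal C2 * ennreal (exp (q * lam * g (fst x) (snd x)))"
          using C1 C2 by (simp add: ennreal_plus[symmetric] ennreal_mult)
        ultimately show ?thesis using \<open>ennreal (rho x * _) \<le> _\<close> by simp
      qed
    qed
  qed
  also have "\<dots> = ennreal C1 * (\<integral>\<^sup>+ x. ennreal (rho x powr \<beta>) \<partial>Q) + ennreal C2 * (\<integral>\<^sup>+ x. ennreal (exp (q * lam * g (fst x) (snd x))) \<partial>Q)"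
    by (simp add: nn_integral_add nn_integral_cmult)
  also have "(\<integral>\<^sup>+ x. ennreal (rho x powr \<beta>) \<partial>Q) = ennreal M"
    unfolding M_def by (rule nn_integral_eq_integral[OF int]) simp
  also have "(\<integral>\<^sup>+ x. ennreal (exp (q * lam * g (fst x) (snd x))) \<partial>Q) \<le> ennreal E"
    unfolding E_def by (rule sub_Q)
  also have "ennreal C1 * ennreal M + ennreal C2 * ennreal E = ennreal (C1 * M + C2 * E)"
    using C1 C2 M0 E0 by (simp add: ennreal_mult'' ennreal_plus)
  also have "C1 * M + C2 * E = K0"
    proof -
    have "C1 * M = K0 / \<beta>" using M0 by (simp add: C1_def)
    moreover have "C2 * E = K0 / q" using E0 by (simp add: C2_def)
    moreover have "K0 / \<beta> + K0 / q = K0 * (1/\<beta> + 1/q)" by (simp add: ring_distribs)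
    ultimately show ?thesis using pq by simp
  qed
  also have "K0 = M powr (1/\<beta>) * exp (\<beta> / (\<beta> - 1) * lam\<^sup>2 * \<sigma>\<^sup>2 / (2 * n))"
  proof -
    have "E powr (1/q) = exp (1/q * ((q * lam)\<^sup>2 * \<sigma>\<^sup>2 / (2 * n)))" by (simp add: E_def powr_def)
    also have "1/q * ((q * lam)\<^sup>2 * \<sigma>\<^sup>2 / (2 * n)) = \<beta> / (\<beta> - 1) * lam\<^sup>2 * \<sigma>\<^sup>2 / (2 * n)"
      using q1 by (simp add: q_def power2_eq_square)
    finally show ?thesis by (simp add: K0_def)
  qed
  finally show ?thesis by (simp add: M_def mult_left_mono)
qed


lemma Mfacts:
  assumes ac: "absolutely_continuous Q P" and b: "\<beta> > 1" and Hfin: "H_div_finite \<beta> P Q"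
  shows "integrable Q (\<lambda>x. rho x powr \<beta>)"
    and "(\<integral>x. rho x powr \<beta> \<partial>Q) = (\<beta> - 1) * H_div \<beta> P Q + 1"
    and "(\<integral>x. rho x powr \<beta> \<partial>Q) \<ge> 1"
proof -
  interpret Qp: prob_space Q by (rule Q_prob)
  define f where "f x = (rho x powr \<beta> - 1) / (\<beta> - 1)" for x
  have fi: "integrable Q f" using Hfin unfolding H_div_finite_def f_def rho_def RN_def .
  have eq: "rho x powr \<beta> = (\<beta> - 1) * f x + 1" for x using b by (simp add: f_def)
  show int: "integrable Q (\<lambda>x. rho x powr \<beta>)"
    unfolding eq using fi by simp
  have "(\<integral>x. rho x powr \<beta> \<partial>Q) = (\<beta> - 1) * (\<integral>x. f x \<partial>Q) + 1"
    unfolding eq using fi by (simp add: Qp.prob_space)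
  then show "(\<integral>x. rho x powr \<beta> \<partial>Q) = (\<beta> - 1) * H_div \<beta> P Q + 1"
    by (simp add: H_div_def f_def rho_def RN_def)
  have "(\<integral>\<^sup>+ x. ennreal (rho x) \<partial>Q) = (\<integral>\<^sup>+ x. RN x * 1 \<partial>Q)"
    by (intro nn_integral_cong_AE) (use RN_fin[OF ac] in \<open>auto simp: rho_def ennreal_enn2real_if\<close>)
  also have "\<dots> = (\<integral>\<^sup>+ x. 1 \<partial>P)"
    by (rule nnPQ[OF ac, symmetric]) simp
  also have "\<dots> = 1" using P_prob by (simp add: prob_space.emeasure_space_1)
  finally have r1: "(\<integral>\<^sup>+ x. ennreal (rho x) \<partial>Q) = ennreal 1" by simp
  have ri: "integrable Q rho"
    by (rule integrableI_nn_integral_finite[OF rho_meas _ r1]) (simp add: rho_def)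
  have rv: "(\<integral>x. rho x \<partial>Q) = 1"
  proof -
    have "(\<integral>x. rho x \<partial>Q) = enn2real (\<integral>\<^sup>+ x. ennreal (rho x) \<partial>Q)"
      by (rule integral_eq_nn_integral[OF rho_meas]) (simp add: rho_def)
    then show ?thesis using r1 by simp
  qed
  have q1: "\<beta> / (\<beta> - 1) > 1" using b by (simp add: less_divide_eq)
  have pq: "1/\<beta> + 1/(\<beta> / (\<beta> - 1)) = 1" using b by (simp add: field_simps)
  have bern: "\<beta> * rho x - (\<beta> - 1) \<le> rho x powr \<beta>" for x
  proof -
    have "rho x * 1 \<le> rho x powr \<beta> / \<beta> + 1 powr (\<beta> / (\<beta> - 1)) / (\<beta> / (\<beta> - 1))"
      by (rule Youngs_inequality[OF b q1 pq]) (auto simp: rho_def)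
    then have "\<beta> * (1 + \<beta> * rho x) \<le> \<beta> * (\<beta> + rho x powr \<beta>)" using b by (simp add: field_simps)
    then have "1 + \<beta> * rho x \<le> \<beta> + rho x powr \<beta>" using b by (simp add: mult_le_cancel_left_pos)
    then show ?thesis by simp
  qed
  have "(\<integral>x. \<beta> * rho x - (\<beta> - 1) \<partial>Q) \<le> (\<integral>x. rho x powr \<beta> \<partial>Q)"
    by (rule integral_mono[OF _ int bern]) (use ri in simp)
  moreover have "(\<integral>x. \<beta> * rho x - (\<beta> - 1) \<partial>Q) = 1"
    using ri rv by (simp add: Qp.prob_space)
  ultimately show "(\<integral>x. rho x powr \<beta> \<partial>Q) \<ge> 1" by simp
qed


lemma I_meas: "(\<lambda>s. \<integral>w. g s w \<partial>K s) \<in> borel_measurable PS"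
proof -
  define K' where "K' s = distr (K s) (PS \<Otimes>\<^sub>M MW) (\<lambda>w. (s, w))" for s
  have Kd: "K \<in> PS \<rightarrow>\<^sub>M subprob_algebra MW" by (rule measurable_prob_algebraD[OF K])
  have K'm: "K' \<in> PS \<rightarrow>\<^sub>M subprob_algebra (PS \<Otimes>\<^sub>M MW)"
    unfolding K'_def by (rule measurable_distr2[OF _ Kd]) simp
  have "(\<lambda>s. \<integral>x. g (fst x) (snd x) \<partial>K' s) \<in> borel_measurable PS"
    by (rule measurable_compose[OF K'm integral_measurable_subprob_algebra[OF g_meas]])
  moreover have "(\<integral>x. g (fst x) (snd x) \<partial>K' s) = (\<integral>w. g s w \<partial>K s)" if s: "s \<in> space PS" for s
  proof -
    have "(\<lambda>w. (s, w)) \<in> K s \<rightarrow>\<^sub>M PS \<Otimes>\<^sub>M MW"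
      using s Ks[OF s] by (simp cong: measurable_cong_sets)
    then show ?thesis unfolding K'_def by (subst integral_distr) auto
  qed
  ultimately show ?thesis by (simp cong: measurable_cong)
qed

lemma main_lam:
  assumes ac: "absolutely_continuous Q P" and b: "\<beta> > 1" and Hfin: "H_div_finite \<beta> P Q"
    and d: "0 < \<delta>" "\<delta> < 1" and lam: "lam > 0"
  shows "measure PS {s \<in> space PS. lam * (\<integral>w. g s w \<partial>K s)
      \<le> ln ((\<integral>x. rho x powr \<beta> \<partial>Q) powr (1/\<beta>) / \<delta>) + \<beta> / (\<beta> - 1) * lam\<^sup>2 * \<sigma>\<^sup>2 / (2 * n)} \<ge> 1 - \<delta>"
proof -
  interpret S: prob_space PS by (rule PS_prob)
  define M where "M = (\<integral>x. rho x powr \<beta> \<partial>Q)"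
  define V where "V = M powr (1/\<beta>) * exp (\<beta> / (\<beta> - 1) * lam\<^sup>2 * \<sigma>\<^sup>2 / (2 * n))"
  define t where "t = V / \<delta>"
  define F where "F s = (\<integral>\<^sup>+ w. ennreal (exp (lam * g s w)) \<partial>K s)" for s
  define I where "I s = (\<integral>w. g s w \<partial>K s)" for s
  have M1: "M \<ge> 1" using Mfacts(3)[OF ac b Hfin] by (simp add: M_def)
  have V1: "V \<ge> 1"
  proof -
    have "M powr (1/\<beta>) \<ge> 1" using M1 b by (simp add: ge_one_powr_ge_zero)
    moreover have "exp (\<beta> / (\<beta> - 1) * lam\<^sup>2 * \<sigma>\<^sup>2 / (2 * n)) \<ge> 1" using b by simp
    ultimately have "1 * 1 \<le> M powr (1/\<beta>) * exp (\<beta> / (\<beta> - 1) * lam\<^sup>2 * \<sigma>\<^sup>2 / (2 * n))"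
      by (intro mult_mono) auto
    then show ?thesis unfolding V_def by simp
  qed
  have t1: "t > 1" using V1 d by (simp add: t_def less_divide_eq)
  have lnt: "ln t = ln (M powr (1/\<beta>) / \<delta>) + \<beta> / (\<beta> - 1) * lam\<^sup>2 * \<sigma>\<^sup>2 / (2 * n)"
    using M1 d by (simp add: t_def V_def ln_div ln_mult)
  have Fm[measurable]: "F \<in> borel_measurable PS"
    unfolding F_def
    by (rule nn_integral_measurable_subprob_algebra2[OF _ measurable_prob_algebraD[OF K]]) simp
  have "(\<integral>\<^sup>+ s. F s \<partial>PS) = (\<integral>\<^sup>+ x. ennreal (exp (lam * g (fst x) (snd x))) \<partial>P)"
    unfolding F_def using nnP[of "\<lambda>x. ennreal (exp (lam * g (fst x) (snd x)))"] by simp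
  also have "\<dots> = (\<integral>\<^sup>+ x. RN x * ennreal (exp (lam * g (fst x) (snd x))) \<partial>Q)"
    by (rule nnPQ[OF ac]) simp
  also have "\<dots> \<le> ennreal V"
    unfolding V_def M_def using Mfacts[OF ac b Hfin]
    by (intro holder[OF ac b]) auto
  finally have intF: "(\<integral>\<^sup>+ s. F s \<partial>PS) \<le> ennreal V" .
  define Bd where "Bd = {s \<in> space PS. 1 \<le> ennreal (1/t) * F s}"
  have Bd_sets: "Bd \<in> sets PS" unfolding Bd_def by measurable
  have "emeasure PS Bd \<le> ennreal (1/t) * (\<integral>\<^sup>+ s. F s * indicator (space PS) s \<partial>PS)"
    unfolding Bd_def by (rule nn_integral_Markov_inequality) auto
  also have "(\<integral>\<^sup>+ s. F s * indicator (space PS) s \<partial>PS) = (\<integral>\<^sup>+ s. F s \<partial>PS)"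
    by (intro nn_integral_cong) simp
  also have "ennreal (1/t) * (\<integral>\<^sup>+ s. F s \<partial>PS) \<le> ennreal (1/t) * ennreal V"
    by (intro mult_left_mono intF) simp
  also have "ennreal (1/t) * ennreal V = ennreal \<delta>"
    using t1 V1 d by (simp add: ennreal_mult[symmetric] t_def)
  finally have mB: "measure PS Bd \<le> \<delta>"
    using d by (simp add: S.emeasure_eq_measure)
  define T where "T = {s \<in> space PS. lam * I s \<le> ln t}"
  have T_sets: "T \<in> sets PS"
    unfolding T_def I_def using I_meas by measurable
  have sub: "space PS - Bd \<subseteq> T"
  proof
    fix s assume s: "s \<in> space PS - Bd"
    then have sp: "s \<in> space PS" by simp
    interpret Kp: prob_space "K s" using Ks[OF sp] by simp
    have "\<not> 1 \<le> ennreal (1/t) * F s" using s by (simp add: Bd_def)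
    then have Flt: "F s < ennreal t"
    proof -
      assume a: "\<not> 1 \<le> ennreal (1/t) * F s"
      show "F s < ennreal t"
      proof (rule ccontr)
        assume "\<not> F s < ennreal t"
        then have "ennreal t \<le> F s" by simp
        then have "ennreal (1/t) * ennreal t \<le> ennreal (1/t) * F s" by (rule mult_left_mono) simp
        moreover have "ennreal (1/t) * ennreal t = 1" using t1 by (simp add: ennreal_mult[symmetric])
        ultimately show False using a by simp
      qed
    qed
    have gm: "(\<lambda>w. g s w) \<in> borel_measurable (K s)"
      using measurable_Pair2[OF g_meas sp] Ks[OF sp] by (simp cong: measurable_cong_sets)
    show "s \<in> T"
    proof (cases "integrable (K s) (g s)")
      case True
      have Fnt: "F s \<noteq> \<top>"
      proof
        assume "F s = \<top>" with Flt show False by simp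
      qed
      have Fr: "F s = ennreal (enn2real (F s))" using Fnt by (simp add: top.not_eq_extremum)
      have ei: "integrable (K s) (\<lambda>w. exp (lam * g s w))"
        by (rule integrableI_nn_integral_finite[OF _ _ Fr[unfolded F_def]]) (use gm in auto)
      have "exp (Kp.expectation (\<lambda>w. lam * g s w)) \<le> Kp.expectation (\<lambda>w. exp (lam * g s w))"
        by (rule Kp.jensens_inequality[where I=UNIV]) (use True ei exp_convex in simp_all)
      also have "Kp.expectation (\<lambda>w. exp (lam * g s w)) = enn2real (F s)"
        unfolding F_def by (rule integral_eq_nn_integral) (use gm in auto)
      finally have ex: "exp (lam * I s) \<le> enn2real (F s)" by (simp add: I_def)
      have "ennreal (enn2real (F s)) < ennreal t" using Flt Fr by simp
      then have "enn2real (F s) < t" by (simp add: ennreal_less_iff)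
      with ex have "exp (lam * I s) \<le> t" by simp
      then have "ln (exp (lam * I s)) \<le> ln t" using t1 by (subst ln_le_cancel_iff) auto
      then have "lam * I s \<le> ln t" by simp
      then show ?thesis using sp by (simp add: T_def)
    next
      case False
      then have "I s = 0" by (simp add: I_def not_integrable_integral_eq)
      then show ?thesis using sp t1 by (simp add: T_def)
    qed
  qed
  have "1 - \<delta> \<le> measure PS (space PS - Bd)"
    using mB Bd_sets by (simp add: S.prob_compl)
  also have "\<dots> \<le> measure PS T"
    by (rule S.finite_measure_mono[OF sub T_sets])
  finally show ?thesis unfolding T_def I_def lnt M_def .
qed

end

theorem corollary3:
  fixes PZ :: "'z measure" and MW :: "'w measure"
    and K :: "(nat \<Rightarrow> 'z) \<Rightarrow> 'w measure"
    and loss :: "'w \<Rightarrow> 'z \<Rightarrow> real"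
    and n :: nat and \<sigma> \<beta> \<delta> :: real
  assumes PZ: "prob_space PZ"
    and n: "n \<ge> 1"
    and K: "K \<in> sample_law n PZ \<rightarrow>\<^sub>M prob_algebra MW"
    and loss_meas: "(\<lambda>(w, z). loss w z) \<in> borel_measurable (MW \<Otimes>\<^sub>M PZ)"
    and subgauss: "\<And>w t. w \<in> space MW \<Longrightarrow>
        (\<integral>\<^sup>+ z. ennreal (exp (t * (loss w z - (\<integral>z'. loss w z' \<partial>PZ)))) \<partial>PZ)
          \<le> ennreal (exp (t\<^sup>2 * \<sigma>\<^sup>2 / 2))"
    and \<beta>: "\<beta> > 1"
    and ac: "absolutely_continuous (sample_law n PZ \<Otimes>\<^sub>M marginal_W (sample_law n PZ) K)
                (joint_law (sample_law n PZ) MW K)"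
    and Hfin: "H_div_finite \<beta> (joint_law (sample_law n PZ) MW K)
                (sample_law n PZ \<Otimes>\<^sub>M marginal_W (sample_law n PZ) K)"
    and \<delta>: "0 < \<delta>" "\<delta> < 1"
  shows "measure (sample_law n PZ)
     {s \<in> space (sample_law n PZ).
        (\<integral>w. gen n PZ loss s w \<partial>(K s))
        \<le> sqrt (2 * \<sigma>\<^sup>2 / real n) *
           (ln (sqrt (pi * \<beta> / (\<beta> - 1))) + \<beta> / (4 * (\<beta> - 1))
            + ln ((((\<beta> - 1) * H_div \<beta> (joint_law (sample_law n PZ) MW K)
                      (sample_law n PZ \<Otimes>\<^sub>M marginal_W (sample_law n PZ) K) + 1) powr (1 / \<beta>)) / \<delta>))}
     \<ge> 1 - \<delta>"
proof -
  interpret gsl PZ MW K loss n \<sigma>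
    using PZ n K loss_meas subgauss by (rule gsl.intro)
  interpret S: prob_space PS by (rule PS_prob)
  define M where "M = (\<integral>x. rho x powr \<beta> \<partial>Q)"
  have Meq: "(\<beta> - 1) * H_div \<beta> P Q + 1 = M"
    using Mfacts(2)[OF ac \<beta> Hfin] by (simp add: M_def)
  have M1: "M \<ge> 1" using Mfacts(3)[OF ac \<beta> Hfin] by (simp add: M_def)
  define L where "L = ln (M powr (1/\<beta>) / \<delta>)"
  define I where "I s = (\<integral>w. g s w \<partial>K s)" for s
  define q where "q = \<beta> / (\<beta> - 1)"
  define c0 where "c0 = ln (sqrt (pi * \<beta> / (\<beta> - 1)))"
  have L0: "L \<ge> 0"
  proof -
    have "M powr (1/\<beta>) \<ge> 1" using M1 \<beta> by (simp add: ge_one_powr_ge_zero)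
    then have "M powr (1/\<beta>) / \<delta> \<ge> 1" using \<delta> by (simp add: le_divide_eq)
    then show ?thesis by (simp add: L_def)
  qed
  have q1: "q > 1" using \<beta> unfolding q_def by (simp add: less_divide_eq)
  have c00: "c0 \<ge> 0"
  proof -
    have "pi * \<beta> / (\<beta> - 1) \<ge> 1" using q1 pi_gt3 unfolding q_def
      by (smt (verit) mult_less_cancel_right2 times_divide_eq_right)
    then show ?thesis unfolding c0_def by simp
  qed
  have q4: "\<beta> / (4 * (\<beta> - 1)) = q / 4" by (simp add: q_def)
  have Im: "I \<in> borel_measurable PS" unfolding I_def by (rule I_meas)
  define T where "T = {s \<in> space PS. I s \<le> sqrt (2 * \<sigma>\<^sup>2 / real n) * (c0 + q / 4 + L)}"
  have T_sets: "T \<in> sets PS" unfolding T_def using Im by measurable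
  have goal: "measure PS T \<ge> 1 - \<delta>"
  proof (cases "\<sigma> = 0")
    case False
    define u where "u = sqrt (2 * \<sigma>\<^sup>2 / real n)"
    have u0: "u > 0" using False n by (simp add: u_def)
    have uu: "u\<^sup>2 = 2 * \<sigma>\<^sup>2 / n" using n by (simp add: u_def)
    have m: "measure PS {s \<in> space PS. (1/u) * I s \<le> L + q * (1/u)\<^sup>2 * \<sigma>\<^sup>2 / (2 * n)} \<ge> 1 - \<delta>"
      using main_lam[OF ac \<beta> Hfin \<delta>, of "1/u"] u0 by (simp add: I_def L_def M_def q_def)
    have e: "q * (1/u)\<^sup>2 * \<sigma>\<^sup>2 / (2 * n) = q / 4"
      using False n u0 uu by (simp add: power_divide field_simps)
    have "{s \<in> space PS. (1/u) * I s \<le> L + q * (1/u)\<^sup>2 * \<sigma>\<^sup>2 / (2 * n)} \<subseteq> T"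
    proof safe
      fix s assume s: "s \<in> space PS" and le: "(1/u) * I s \<le> L + q * (1/u)\<^sup>2 * \<sigma>\<^sup>2 / (2 * n)"
      from le[unfolded e] have "I s / u \<le> L + q / 4" by simp
      then have "I s \<le> u * (L + q / 4)" using u0 by (simp add: divide_le_eq mult.commute)
      also have "\<dots> \<le> u * (c0 + q / 4 + L)" using u0 c00 by (intro mult_left_mono) auto
      finally show "s \<in> T" using s by (simp add: T_def u_def)
    qed
    then show ?thesis using m S.finite_measure_mono[OF _ T_sets] by (meson order_trans)
  next
    case True
    define A where "A k = {s \<in> space PS. (real k + 1) * I s \<le> L}" for k :: nat
    have mA: "measure PS (A k) \<ge> 1 - \<delta>" for k
      using main_lam[OF ac \<beta> Hfin \<delta>, of "real k + 1"] True by (simp add: A_def I_def L_def M_def)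
    have As: "range A \<subseteq> sets PS" unfolding A_def using Im by auto
    have dec: "decseq A"
    proof (rule decseq_SucI)
      fix k show "A (Suc k) \<subseteq> A k"
      proof
        fix s assume "s \<in> A (Suc k)"
        then have s: "s \<in> space PS" "(real k + 2) * I s \<le> L" by (auto simp: A_def add.commute)
        have "(real k + 1) * I s \<le> L"
        proof (cases "I s \<ge> 0")
          case True
          then have "(real k + 1) * I s \<le> (real k + 2) * I s" by (intro mult_right_mono) auto
          then show ?thesis using s by simp
        next
          case False
          then have "(real k + 1) * I s \<le> 0" by (simp add: mult_nonneg_nonpos)
          then show ?thesis using L0 by simp
        qed
        then show "s \<in> A k" using s by (simp add: A_def)
      qed
    qed
    have lim: "(\<lambda>k. measure PS (A k)) \<longlonglongrightarrow> measure PS (\<Inter>k. A k)"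
      by (rule S.finite_Lim_measure_decseq[OF As dec])
    have "1 - \<delta> \<le> measure PS (\<Inter>k. A k)"
      by (rule LIMSEQ_le_const[OF lim]) (use mA in auto)
    moreover have "(\<Inter>k. A k) \<subseteq> T"
    proof
      fix s assume s: "s \<in> (\<Inter>k. A k)"
      have sp: "s \<in> space PS" using s by (auto simp: A_def)
      have "I s \<le> 0"
      proof (rule ccontr)
        assume "\<not> I s \<le> 0"
        then have Ip: "I s > 0" by simp
        obtain k :: nat where k: "L / I s < real k" using reals_Archimedean2 by blast
        have "L < real k * I s" using k Ip by (simp add: divide_less_eq)
        also have "\<dots> \<le> (real k + 1) * I s" using Ip by (simp add: distrib_right)
        finally have "\<not> (real k + 1) * I s \<le> L" by simp
        moreover have "s \<in> A k" using s by simp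
        ultimately show False by (simp add: A_def)
      qed
      then show "s \<in> T" using sp True by (simp add: T_def)
    qed
    ultimately show ?thesis using S.finite_measure_mono[OF _ T_sets] by (meson order_trans)
  qed
  show ?thesis
    using goal unfolding T_def I_def c0_def q4[symmetric] L_def Meq[symmetric]
    by (simp add: add.assoc add.commute add.left_commute)
qed
end
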